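(* Let $m>6C^2(C+1)$ and $l_m=\lfloor\frac{m-2}{C+1}\rfloor$. If $\sum_{i=1}^n a_iP_m(x_i)$ is a leaf of the escalator tree of $m$-gonal forms with $n\ge l_m$ and $a_{l_m}\ge C+1$, then $$n\le \left(1-\frac{1}{(C+1)^2}\right)(m-2)+\frac{C+2}{C+1}.$$
   Context: For an integer $m\ge 3$ and $x\in\mathbb Z$ put $P_m(x)=\frac{m-2}{2}x^2-\frac{m-4}{2}x$. An $m$-gonal form of rank $n$ is $a_1P_m(x_1)+\cdots+a_nP_m(x_n)$ with positive integers $a_1\le\cdots\le a_n$ and $x_i\in\mathbb Z$; it represents $N$ if $N$ is a value at some integer vector, and is universal if it represents every positive integer. The truant of a non-universal form is the smallest positive integer it does not represent (the empty form has truant $1$). The escalator tree of $m$-gonal forms is the rooted tree whose root is the empty form; a universal node is a leaf, and a non-universal node $\sum_{i=1}^k a_iP_m(x_i)$ has as children exactly all forms $\sum_{i=1}^{k+1}a_iP_m(x_i)$ with $a_{k+1}\ge a_k$ (any $a_1\ge1$ if $k=0$) that represent the truant of the node. Standing assumption: $C$ is a fixed absolute constant such that for every $m\ge3$, every $m$-gonal form that represents every positive integer in $[1,C(m-2)]$ is universal. *)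

theory Defs
  imports Complex_Main
begin

text \<open>The m-gonal number P_m(x) = ((m-2)/2) x^2 - ((m-4)/2) x, integer valued.\<close>
definition Pm :: "nat \<Rightarrow> int \<Rightarrow> int" where
  "Pm m x = ((int m - 2) * x^2 - (int m - 4) * x) div 2"

text \<open>An m-gonal form a_1 P_m(x_1)+...+a_n P_m(x_n) is given by its coefficient list
  [a_1,...,a_n] (positive, nondecreasing).\<close>
definition represents :: "nat \<Rightarrow> int list \<Rightarrow> int \<Rightarrow> bool" where
  "represents m as N \<longleftrightarrow> (\<exists>x :: nat \<Rightarrow> int. N = (\<Sum>i<length as. as ! i * Pm m (x i)))"

definition universal :: "nat \<Rightarrow> int list \<Rightarrow> bool" where
  "universal m as \<longleftrightarrow> (\<forall>N::int. N \<ge> 1 \<longrightarrow> represents m as N)"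

definition truant :: "nat \<Rightarrow> int list \<Rightarrow> int" where
  "truant m as = (LEAST N::int. N \<ge> 1 \<and> \<not> represents m as N)"

inductive escalator_node :: "nat \<Rightarrow> int list \<Rightarrow> bool" for m where
  root: "escalator_node m []"
| child: "\<lbrakk> escalator_node m as; \<not> universal m as; a \<ge> 1;
           as \<noteq> [] \<longrightarrow> a \<ge> last as;
           represents m (as @ [a]) (truant m as) \<rbrakk> \<Longrightarrow> escalator_node m (as @ [a])"

definition escalator_leaf :: "nat \<Rightarrow> int list \<Rightarrow> bool" where
  "escalator_leaf m as \<longleftrightarrow> escalator_node m as \<and> universal m as"

definition standing_constant :: "real \<Rightarrow> bool" where
  "standing_constant C \<longleftrightarrow>
     (\<forall>m::nat. m \<ge> 3 \<longrightarrow> (\<forall>as::int list. (\<forall>i<length as. as ! i \<ge> 1) \<and> sorted as \<longrightarrow>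
        (\<forall>N::int. 1 \<le> N \<and> real_of_int N \<le> C * (real m - 2) \<longrightarrow> represents m as N) \<longrightarrow>
        universal m as))"

end

theory Submission
  imports Defs
begin

lemma Pm0: "Pm m 0 = 0" by (simp add: Pm_def)
lemma Pm1: "Pm m 1 = 1" by (simp add: Pm_def)

lemma Pm_nonneg: assumes "m \<ge> 3" shows "Pm m x \<ge> 0"
proof -
  have "(int m - 2) * x^2 - (int m - 4) * x = x * ((int m - 2) * x - (int m - 4))"
    by (simp add: power2_eq_square algebra_simps)
  moreover have "x * ((int m - 2) * x - (int m - 4)) \<ge> 0"
  proof (cases "x \<ge> 1")
    case True
    then have "(int m - 2) * x \<ge> (int m - 2) * 1" using assms by (intro mult_left_mono) auto
    then show ?thesis using True by (intro mult_nonneg_nonneg) auto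
  next
    case False
    show ?thesis
    proof (cases "x = 0")
      case False
      with \<open>\<not> x \<ge> 1\<close> have "x \<le> -1" by auto
      then have "(int m - 2) * x \<le> (int m - 2) * (-1)" using assms by (intro mult_left_mono) auto
      then show ?thesis using \<open>x \<le> -1\<close> assms by (intro mult_nonpos_nonpos) auto
    qed simp
  qed
  ultimately show ?thesis unfolding Pm_def by simp
qed

lemma sum_snoc:
  "(\<Sum>i<length (as@[a]). (as@[a])!i * Pm m (x i)) =
   (\<Sum>i<length as. as!i * Pm m (x i)) + a * Pm m (x (length as))"
  by (simp add: nth_append)

lemma rep_snoc:
  assumes "represents m as N" shows "represents m (as@[a]) (N + a * Pm m v)"
proof -
  obtain x where x: "N = (\<Sum>i<length as. as ! i * Pm m (x i))"
    using assms unfolding represents_def by blast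
  define y where "y = x(length as := v)"
  have "(\<Sum>i<length as. as ! i * Pm m (y i)) = (\<Sum>i<length as. as ! i * Pm m (x i))"
    by (rule sum.cong) (auto simp: y_def)
  then have "N + a * Pm m v = (\<Sum>i<length (as@[a]). (as@[a])!i * Pm m (y i))"
    unfolding sum_snoc using x by (simp add: y_def)
  then show ?thesis unfolding represents_def by blast
qed

lemma rep_snoc_inv:
  assumes "represents m (as@[a]) N" shows "\<exists>N' v. represents m as N' \<and> N = N' + a * Pm m v"
proof -
  obtain x where x: "N = (\<Sum>i<length (as@[a]). (as@[a]) ! i * Pm m (x i))"
    using assms unfolding represents_def by blast
  then show ?thesis unfolding sum_snoc represents_def by blast
qed

lemma rep_zero: "represents m as 0"
  unfolding represents_def by (rule exI[of _ "\<lambda>_. 0"]) (simp add: Pm0)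

lemma rep_nonneg:
  assumes "m \<ge> 3" "\<forall>i<length as. as!i \<ge> 1" "represents m as N" shows "N \<ge> 0"
proof -
  obtain x where x: "N = (\<Sum>i<length as. as ! i * Pm m (x i))"
    using assms unfolding represents_def by blast
  have "(\<Sum>i<length as. as ! i * Pm m (x i)) \<ge> 0"
    using assms(2) Pm_nonneg[OF assms(1)] by (intro sum_nonneg mult_nonneg_nonneg) force+
  then show ?thesis using x by simp
qed

lemma truant_props:
  assumes "\<not> universal m as"
  shows "truant m as \<ge> 1 \<and> \<not> represents m as (truant m as) \<and>
         (\<forall>N. 1 \<le> N \<longrightarrow> N < truant m as \<longrightarrow> represents m as N)"
proof -
  obtain N0 where N0: "N0 \<ge> 1" "\<not> represents m as N0" using assms unfolding universal_def by auto
  define P where "P = (\<lambda>n::nat. n \<ge> 1 \<and> \<not> represents m as (int n))"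
  have PN0: "P (nat N0)" using N0 by (auto simp: P_def)
  define n0 where "n0 = (LEAST n. P n)"
  have Pn0: "P n0" unfolding n0_def using PN0 by (rule LeastI)
  have min: "\<And>n. P n \<Longrightarrow> n0 \<le> n" unfolding n0_def by (rule Least_le)
  have eq: "truant m as = int n0"
    unfolding truant_def
  proof (rule Least_equality)
    show "int n0 \<ge> 1 \<and> \<not> represents m as (int n0)" using Pn0 by (auto simp: P_def)
    fix y :: int assume "y \<ge> 1 \<and> \<not> represents m as y"
    then have "P (nat y)" by (auto simp: P_def)
    then have "n0 \<le> nat y" by (rule min)
    then show "int n0 \<le> y" using \<open>y \<ge> 1 \<and> _\<close> by linarith
  qed
  show ?thesis
  proof (intro conjI allI impI)
    show "truant m as \<ge> 1" "\<not> represents m as (truant m as)" using Pn0 eq by (auto simp: P_def)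
    fix N :: int assume "1 \<le> N" "N < truant m as"
    then have "\<not> P (nat N)" using min eq by force
    then show "represents m as N" using \<open>1 \<le> N\<close> by (auto simp: P_def)
  qed
qed

lemma node_inv:
  assumes "escalator_node m as" "m \<ge> 3"
  shows "(\<forall>i<length as. as!i \<ge> 1) \<and> sorted as \<and>
         (\<forall>N. 1 \<le> N \<and> N \<le> sum_list as \<longrightarrow> represents m as N)"
  using assms(1)
proof (induction rule: escalator_node.induct)
  case root
  then show ?case by auto
next
  case (child as a)
  define T where "T = truant m as"
  have pos: "\<forall>i<length as. as!i \<ge> 1" and srt: "sorted as"
    and cov: "\<forall>N. 1 \<le> N \<and> N \<le> sum_list as \<longrightarrow> represents m as N" using child.IH by auto
  have TP: "T \<ge> 1" "\<not> represents m as T" "\<And>N. 1 \<le> N \<Longrightarrow> N < T \<Longrightarrow> represents m as N"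
    using truant_props[OF child.hyps(2)] unfolding T_def by auto
  have aT: "a \<le> T"
  proof (rule ccontr)
    assume "\<not> a \<le> T"
    obtain N' v where N': "represents m as N'" "T = N' + a * Pm m v"
      using rep_snoc_inv[OF child.hyps(5)[folded T_def]] by blast
    have "N' \<ge> 0" using rep_nonneg[OF assms(2) pos N'(1)] .
    show False
    proof (cases "Pm m v = 0")
      case True then show False using N' TP(2) by simp
    next
      case False
      then have "Pm m v \<ge> 1" using Pm_nonneg[OF assms(2), of v] by linarith
      then have "a * Pm m v \<ge> a * 1" using child.hyps(3) by (intro mult_left_mono) auto
      then show False using N' \<open>N' \<ge> 0\<close> \<open>\<not> a \<le> T\<close> by linarith
    qed
  qed
  have sT: "sum_list as < T"
    using cov TP by (meson not_le)
  have A: "\<forall>N. 1 \<le> N \<and> N \<le> sum_list (as @ [a]) \<longrightarrow> represents m (as @ [a]) N"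
  proof (intro allI impI)
    fix N assume N: "1 \<le> N \<and> N \<le> sum_list (as @ [a])"
    show "represents m (as @ [a]) N"
    proof (cases "N < T")
      case True
      then have "represents m as N" using TP N by auto
      from rep_snoc[OF this, of a 0] show ?thesis by (simp add: Pm0)
    next
      case False
      then have r: "represents m as (N - a)"
        using cov N aT rep_zero[of m as] by (cases "N - a = 0") auto
      from rep_snoc[OF r, of a 1] show ?thesis by (simp add: Pm1)
    qed
  qed
  show ?case
  proof (intro conjI A)
    show "\<forall>i<length (as @ [a]). 1 \<le> (as @ [a]) ! i"
      using pos child.hyps(3) by (auto simp: nth_append less_Suc_eq)
    show "sorted (as @ [a])"
    proof (cases "as = []")
      case False
      have "\<forall>x\<in>set as. x \<le> last as"
      proof
        fix x assume "x \<in> set as"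
        then obtain i where i: "i < length as" "x = as ! i" by (auto simp: in_set_conv_nth)
        have "as ! i \<le> as ! (length as - 1)" using srt i by (intro sorted_nth_mono) auto
        then show "x \<le> last as" using i False by (simp add: last_conv_nth)
      qed
      then show ?thesis using srt False child.hyps(4) by (auto simp: sorted_append)
    qed simp
  qed
qed

lemma C_ge1: assumes "standing_constant C" shows "C \<ge> 1"
proof (rule ccontr)
  assume "\<not> C \<ge> 1"
  have "universal 3 []"
    using assms[unfolded standing_constant_def, rule_format, of 3 "[]"] \<open>\<not> C \<ge> 1\<close> by force
  then have "represents 3 [] 1" unfolding universal_def by auto
  then show False unfolding represents_def by simp
qed

lemma final_arith:
  fixes c M n L S :: real
  assumes "c \<ge> 1" "L * (c + 1) \<le> M" "S \<ge> (L - 1) + (n - L) * (c + 1)" "S + 1 \<le> c * M"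
  shows "n \<le> (1 - 1 / (c + 1)^2) * M + (c + 2) / (c + 1)"
proof -
  have h1: "n * (c + 1) \<le> c * M + c * L" using assms(3,4) by (simp add: algebra_simps)
  have "n * (c + 1) * (c + 1) \<le> (c * M + c * L) * (c + 1)"
    using h1 assms(1) by (intro mult_right_mono) auto
  also have "\<dots> = c * M * (c + 1) + c * (L * (c + 1))" by (simp add: algebra_simps)
  also have "\<dots> \<le> c * M * (c + 1) + c * M" using assms(1,2) by (intro add_left_mono mult_left_mono) auto
  finally have h2: "n * (c + 1)^2 \<le> ((c + 1)^2 - 1) * M"
    by (simp add: power2_eq_square algebra_simps)
  have pos: "(c + 1)^2 > 0" using assms(1) by simp
  have "n \<le> ((c + 1)^2 - 1) * M / (c + 1)^2" using h2 pos by (simp add: field_simps)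
  also have "\<dots> = (1 - 1 / (c + 1)^2) * M" using pos by (simp add: field_simps)
  also have "\<dots> \<le> (1 - 1 / (c + 1)^2) * M + (c + 2) / (c + 1)" using assms(1) by simp
  finally show ?thesis .
qed

theorem lemma4p3:
  fixes C :: real and m :: nat and as :: "int list"
  assumes "standing_constant C"
    and "m \<ge> 3"
    and "real m > 6 * C^2 * (C + 1)"
    and "escalator_leaf m as"
    and "int (length as) \<ge> \<lfloor>(real m - 2) / (C + 1)\<rfloor>"
    and "real_of_int (as ! nat (\<lfloor>(real m - 2) / (C + 1)\<rfloor> - 1)) \<ge> C + 1"
  shows "real (length as) \<le> (1 - 1 / (C + 1)^2) * (real m - 2) + (C + 2) / (C + 1)"
proof -
  have C1: "C \<ge> 1" using C_ge1[OF assms(1)] .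
  define l where "l = \<lfloor>(real m - 2) / (C + 1)\<rfloor>"
  have "C^2 \<ge> 1" using C1 by (simp add: one_le_power)
  then have "6 * C^2 * (C + 1) \<ge> 6 * 1 * (C + 1)" using C1 by (intro mult_right_mono) auto
  then have "6 * 1 * (C + 1) < real m" using assms(3) by (rule le_less_trans)
  then have "real m - 2 \<ge> C + 1" using C1 by (simp add: algebra_simps)
  then have "(real m - 2) / (C + 1) \<ge> 1" using C1 by simp
  then have l1: "l \<ge> 1" unfolding l_def by linarith
  have lle: "real_of_int l * (C + 1) \<le> real m - 2"
  proof -
    have "real_of_int l \<le> (real m - 2) / (C + 1)" unfolding l_def by linarith
    then show ?thesis using C1 by (simp add: field_simps)
  qed
  have node: "escalator_node m as" and univ: "universal m as"
    using assms(4) unfolding escalator_leaf_def by auto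
  have "as \<noteq> []"
  proof
    assume "as = []"
    with univ have "represents m [] 1" unfolding universal_def by auto
    then show False unfolding represents_def by simp
  qed
  then obtain bs a where as: "as = bs @ [a]" and bnode: "escalator_node m bs"
    and bnu: "\<not> universal m bs"
    using node \<open>as \<noteq> []\<close> by (auto elim: escalator_node.cases)
  have invA: "(\<forall>i<length as. as!i \<ge> 1) \<and> sorted as" using node_inv[OF node assms(2)] by auto
  have invB: "(\<forall>i<length bs. bs!i \<ge> 1) \<and> sorted bs \<and>
         (\<forall>N. 1 \<le> N \<and> N \<le> sum_list bs \<longrightarrow> represents m bs N)"
    using node_inv[OF bnode assms(2)] .
  define T where "T = truant m bs"
  have TP: "T \<ge> 1" "\<not> represents m bs T" "\<And>N. 1 \<le> N \<Longrightarrow> N < T \<Longrightarrow> represents m bs N"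
    using truant_props[OF bnu] unfolding T_def by auto
  have sT: "sum_list bs + 1 \<le> T" using invB TP by (meson not_le zless_imp_add1_zle)
  obtain N0 where N0: "1 \<le> N0" "real_of_int N0 \<le> C * (real m - 2)" "\<not> represents m bs N0"
    using assms(1)[unfolded standing_constant_def, rule_format, OF assms(2), of bs] invB bnu by blast
  have "T \<le> N0" using TP(3) N0 by (meson not_le)
  then have up: "real_of_int (sum_list bs) + 1 \<le> C * (real m - 2)" using sT N0(2)
    by (smt (verit) of_int_le_iff of_int_add of_int_1)
  define n where "n = length as"
  define L where "L = nat l"
  have Ln: "L \<le> n" "L \<ge> 1" using assms(5)[folded l_def] l1 unfolding L_def n_def by auto
  have lenb: "length bs = n - 1" using as n_def by simp
  have aL: "real_of_int (as ! (L - 1)) \<ge> C + 1" using assms(6) unfolding L_def l_def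
    by (metis l1 l_def nat_diff_distrib' nat_one_as_int zero_le_one order_trans)
  have sb: "sum_list bs = (\<Sum>i<n - 1. as ! i)"
    unfolding sum_list_sum_nth lenb using as lenb by (intro sum.cong) (auto simp: nth_append lessThan_atLeast0)
  have split: "{..<n - 1} = {..<L - 1} \<union> {L - 1..<n - 1}" using Ln by auto
  have "real_of_int (sum_list bs) = (\<Sum>i<L - 1. real_of_int (as ! i)) + (\<Sum>i\<in>{L - 1..<n - 1}. real_of_int (as ! i))"
    unfolding sb of_int_sum split by (rule sum.union_disjoint) auto
  moreover have "(\<Sum>i<L - 1. real_of_int (as ! i)) \<ge> (\<Sum>i<L - 1. 1)"
    using invA Ln n_def by (intro sum_mono) auto
  moreover have "(\<Sum>i\<in>{L - 1..<n - 1}. real_of_int (as ! i)) \<ge> (\<Sum>i\<in>{L - 1..<n - 1}. C + 1)"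
  proof (intro sum_mono)
    fix i assume "i \<in> {L - 1..<n - 1}"
    then have "as ! (L - 1) \<le> as ! i" using invA n_def by (intro sorted_nth_mono) auto
    then show "real_of_int (as ! i) \<ge> C + 1" using aL by linarith
  qed
  ultimately have low: "real_of_int (sum_list bs) \<ge> real (L - 1) + real (n - L) * (C + 1)"
    using Ln by simp
  have Lr: "real L = real_of_int l" using l1 unfolding L_def by simp
  have "real n \<le> (1 - 1 / (C + 1)^2) * (real m - 2) + (C + 2) / (C + 1)"
  proof (rule final_arith[OF C1, where L="real L" and M="real m - 2" and S="real_of_int (sum_list bs)" and n="real n"])
    show "real L * (C + 1) \<le> real m - 2" using lle Lr by simp
    show "real L - 1 + (real n - real L) * (C + 1) \<le> real_of_int (sum_list bs)"
      using low Ln by (simp add: of_nat_diff)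
    show "real_of_int (sum_list bs) + 1 \<le> C * (real m - 2)" using up .
  qed
  then show ?thesis unfolding n_def .
qed

end
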